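(* Let $h>0$, $n\in\mathbb{N}$, and let $\lambda:\mathbb{T}\to\mathbb{R}$ be an $n$-cycle with values $\lambda_0,\dots,\lambda_{n-1}\in\mathbb{R}\setminus\{\pm\tfrac1h\}$, such that $0<|e_{\lambda}(nh)|\neq1$ and $0<|e_{-\lambda}(nh)|\neq1$. Define for $t\in\mathbb{T}$ $$p(t)=\lambda(t+2h),\quad q(t)=2\Delta_h\lambda(t+h)+\Delta_h\lambda(t+2h)-\lambda(t+2h)\lambda(t+3h),$$ $$r(t)=\Delta_h^2\lambda(t)+\lambda(t)\Delta_h\lambda(t+2h)-\lambda(t)\lambda(t+2h)\lambda(t+3h).$$ Then the third-order equation $$\Delta_h^3y(t)+p(t)\Delta_h^2y(t)+q(t)\Delta_h y(t)+r(t)y(t)=0,\qquad t\in\mathbb{T},$$ has Hyers–Ulam stability on $\mathbb{T}$ with Hyers–Ulam stability constant $K=K_0(\lambda)\bigl(K_0(-\lambda)\bigr)^2$.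
   Context: Fix $h>0$ and let $\mathbb{T}=\{0,h,2h,3h,\dots\}$. For $x:\mathbb{T}\to\mathbb{R}$, $\Delta_h x(t)=\frac{x(t+h)-x(t)}{h}$ and $\Delta_h^2x=\Delta_h(\Delta_h x)$, $\Delta_h^3x=\Delta_h(\Delta_h^2 x)$. An $n$-cycle is a function $\mu:\mathbb{T}\to\mathbb{R}$ with $\mu(t)=\mu_k$ whenever $t/h\equiv k\pmod n$, $k\in\{0,\dots,n-1\}$, which has period $n$ and no smaller period. For such $\mu$ define the discrete exponential $e_\mu(t)=\prod_{k=0}^{t/h-1}(1+h\mu(kh))$ (empty product $=1$), so $e_\mu(nh)=\prod_{k=0}^{n-1}(1+h\mu_k)$. For $k\in\{0,\dots,n-1\}$ define $$S_k(\mu)=\sum_{j=1}^{n}\prod_{i=0}^{j-1}\frac{1}{|1+h\mu_{(k+i)\bmod n}|},$$ (e.g. $S_0(\mu)=\frac{1}{|1+h\mu_0|}+\frac{1}{|1+h\mu_0||1+h\mu_1|}+\dots+\frac{1}{|1+h\mu_0|\cdots|1+h\mu_{n-1}|}$), and, when $0<|e_\mu(nh)|\neq1$, $$K_0(\mu)=\frac{h|e_\mu(nh)|}{\bigl|1-|e_\mu(nh)|\bigr|}\max\{S_0(\mu),\dots,S_{n-1}(\mu)\}.$$ Here $-\lambda$ denotes the $n$-cycle with values $-\lambda_0,\dots,-\lambda_{n-1}$. Hyers–Ulam stability: an equation $\mathcal{L}[y](t)=f(t)$, $t\in\mathbb{T}$ (with $\mathcal{L}$ a linear difference operator) has Hyers–Ulam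 stability on $\mathbb{T}$ with Hyers–Ulam stability constant $K>0$ if for every $\varepsilon>0$ and every $\xi:\mathbb{T}\to\mathbb{R}$ with $|\mathcal{L}[\xi](t)-f(t)|\le\varepsilon$ for all $t\in\mathbb{T}$, there is a solution $y:\mathbb{T}\to\mathbb{R}$ of the equation with $|\xi(t)-y(t)|\le K\varepsilon$ for all $t\in\mathbb{T}$. The minimum Hyers–Ulam stability constant is the smallest such $K$. *)

theory Defs
  imports Complex_Main
begin

text \<open>The time scale hZ_{\<ge>0} = {0,h,2h,...} is indexed by nat: a function x on T is
  represented as x :: nat \<Rightarrow> real with x k = x(kh).\<close>

definition dlt :: "real \<Rightarrow> (nat \<Rightarrow> real) \<Rightarrow> nat \<Rightarrow> real" where
  "dlt h x k = (x (Suc k) - x k) / h"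

definition is_cycle :: "nat \<Rightarrow> (nat \<Rightarrow> real) \<Rightarrow> bool" where
  "is_cycle n \<mu> \<longleftrightarrow> n \<ge> 1 \<and> (\<forall>k. \<mu> (k + n) = \<mu> k)
     \<and> (\<forall>m. 0 < m \<and> m < n \<longrightarrow> \<not> (\<forall>k. \<mu> (k + m) = \<mu> k))"

definition dexp :: "real \<Rightarrow> (nat \<Rightarrow> real) \<Rightarrow> nat \<Rightarrow> real" where
  "dexp h \<mu> k = (\<Prod>i<k. 1 + h * \<mu> i)"

definition Sk :: "real \<Rightarrow> nat \<Rightarrow> (nat \<Rightarrow> real) \<Rightarrow> nat \<Rightarrow> real" where
  "Sk h n \<mu> k = (\<Sum>j=1..n. \<Prod>i<j. 1 / \<bar>1 + h * \<mu> ((k + i) mod n)\<bar>)"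

definition K0 :: "real \<Rightarrow> nat \<Rightarrow> (nat \<Rightarrow> real) \<Rightarrow> real" where
  "K0 h n \<mu> = h * \<bar>dexp h \<mu> n\<bar> / \<bar>1 - \<bar>dexp h \<mu> n\<bar>\<bar>
      * Max {Sk h n \<mu> k | k. k < n}"

definition hu_stable :: "((nat \<Rightarrow> real) \<Rightarrow> nat \<Rightarrow> real) \<Rightarrow> (nat \<Rightarrow> real) \<Rightarrow> real \<Rightarrow> bool" where
  "hu_stable L f K \<longleftrightarrow> K > 0 \<and>
     (\<forall>\<epsilon>>0. \<forall>\<xi>. (\<forall>t. \<bar>L \<xi> t - f t\<bar> \<le> \<epsilon>) \<longrightarrow>
        (\<exists>y. (\<forall>t. L y t = f t) \<and> (\<forall>t. \<bar>\<xi> t - y t\<bar> \<le> K * \<epsilon>)))"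

end

theory Submission
  imports Defs
begin

lemma periodic_mult: fixes m n k :: nat and f :: "nat \<Rightarrow> real" assumes "\<forall>k. f (k + n) = (f k :: real)" shows "f (k + m*n) = f k"
proof (induction m)
  case 0 then show ?case by simp
next
  case (Suc m)
  have "f (k + Suc m * n) = f ((k + m*n) + n)" by (simp add: algebra_simps)
  then show ?case using assms Suc by simp
qed

lemma periodic_mod: fixes f :: "nat \<Rightarrow> real" and n x :: nat assumes "\<forall>k. f (k + n) = (f k :: real)" shows "f (x mod n) = f x"
proof -
  have "f (x mod n + (x div n)*n) = f (x mod n)" by (rule periodic_mult[of f n, OF assms])
  moreover have "x mod n + (x div n)*n = x" by simp
  ultimately show ?thesis by simp
qed

lemma prod_shift_periodic:
  fixes f :: "nat \<Rightarrow> real"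
  assumes "\<forall>k. f (k + n) = f k" "\<forall>k. f k \<noteq> 0"
  shows "(\<Prod>i<n. f (t + i)) = (\<Prod>i<n. f i)"
proof (induction t)
  case 0 then show ?case by simp
next
  case (Suc t)
  have "(\<Prod>i<Suc n. f (t + i)) = f t * (\<Prod>i<n. f (Suc t + i))"
    by (subst prod.lessThan_Suc_shift) simp
  moreover have "(\<Prod>i<Suc n. f (t + i)) = (\<Prod>i<n. f (t + i)) * f t"
    using assms(1) by (simp add: add.commute[of n t])
  ultimately have "f t * (\<Prod>i<n. f (Suc t + i)) = f t * (\<Prod>i<n. f i)"
    using Suc by (simp add: mult.commute)
  then show ?case using assms(2) by simp
qed

lemma L_factor:
  assumes "h \<noteq> 0"
  shows "dlt h (dlt h (dlt h y)) t + lam (t + 2) * dlt h (dlt h y) t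
       + (2 * dlt h lam (t + 1) + dlt h lam (t + 2) - lam (t + 2) * lam (t + 3)) * dlt h y t
       + (dlt h (dlt h lam) t + lam t * dlt h lam (t + 2) - lam t * lam (t + 2) * lam (t + 3)) * y t
     = dlt h (\<lambda>s. dlt h (\<lambda>u. dlt h y u + lam u * y u) s + lam (s+2) * (dlt h y s + lam s * y s)) t
       - lam (t+3) * (dlt h (\<lambda>u. dlt h y u + lam u * y u) t + lam (t+2) * (dlt h y t + lam t * y t))"
  using assms by (simp add: dlt_def field_simps numeral_eq_Suc)

lemma first_order:
  fixes h \<epsilon> :: real and n c :: nat and \<nu> g \<xi> :: "nat \<Rightarrow> real"
  assumes h: "h > 0" and n: "n \<ge> 1" and per: "\<forall>k. \<nu> (k+n) = \<nu> k"
    and nz: "\<forall>k. 1 + h*\<nu> k \<noteq> 0"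
    and E0: "0 < \<bar>dexp h \<nu> n\<bar>" and E1: "\<bar>dexp h \<nu> n\<bar> \<noteq> 1"
    and bnd: "\<forall>t. \<bar>dlt h \<xi> t - \<nu> (t+c) * \<xi> t - g t\<bar> \<le> \<epsilon>"
  shows "\<exists>y. (\<forall>t. dlt h y t - \<nu> (t+c) * y t = g t) \<and> (\<forall>t. \<bar>\<xi> t - y t\<bar> \<le> K0 h n \<nu> * \<epsilon>)"
proof -
  define a where "a t = 1 + h * \<nu> (t + c)" for t
  define e where "e = \<bar>dexp h \<nu> n\<bar>"
  define P where "P t j = (\<Prod>i<j. 1 / \<bar>a (t+i)\<bar>)" for t j
  define Sp where "Sp t = (\<Sum>j<n. P t (Suc j))" for t
  define G where "G t = e * Sp t / \<bar>1 - e\<bar>" for t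
  define M where "M = Max {Sk h n \<nu> k | k. k < n}"
  define f where "f t = dlt h \<xi> t - \<nu> (t+c) * \<xi> t - g t" for t
  have eps: "\<epsilon> \<ge> 0" using bnd[rule_format, of 0] by linarith
  have fb: "\<bar>f t\<bar> \<le> \<epsilon>" for t using bnd f_def by simp
  have anz: "a t \<noteq> 0" for t using nz by (simp add: a_def)
  have aper: "\<forall>k. (\<lambda>k. 1 + h*\<nu> k) (k+n) = (\<lambda>k. 1 + h*\<nu> k) k" using per by simp
  have prodE: "(\<Prod>i<n. a (t+i)) = dexp h \<nu> n" for t
    using prod_shift_periodic[of "\<lambda>k. 1 + h*\<nu> k" n "t+c"] aper nz unfolding a_def dexp_def
    by (simp add: add_ac)
  have epos: "e > 0" using E0 e_def by simp
  have Pn: "P t n = 1/e" for t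
    unfolding P_def e_def prodE[symmetric, of t] by (simp add: abs_prod prod_dividef)
  have PSuc: "P t (Suc j) = (1/\<bar>a t\<bar>) * P (Suc t) j" for t j
    unfolding P_def by (subst prod.lessThan_Suc_shift) simp
  have Pnn: "P t j \<ge> 0" for t j unfolding P_def by (simp add: prod_nonneg)
  have ident: "\<bar>a t\<bar> * Sp t = 1 + Sp (Suc t) - 1/e" for t
  proof -
    have "\<bar>a t\<bar> * Sp t = (\<Sum>j<n. P (Suc t) j)"
      unfolding Sp_def sum_distrib_left PSuc using anz by simp
    also have "\<dots> = (\<Sum>j<Suc n. P (Suc t) j) - P (Suc t) n" by simp
    also have "(\<Sum>j<Suc n. P (Suc t) j) = 1 + Sp (Suc t)"
      unfolding Sp_def by (subst sum.lessThan_Suc_shift) (simp add: P_def)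
    finally show ?thesis using Pn by simp
  qed
  have SpSk: "Sp t = Sk h n \<nu> ((t + c) mod n)" for t
  proof -
    have "Sk h n \<nu> ((t+c) mod n) = (\<Sum>j<n. \<Prod>i<Suc j. 1 / \<bar>1 + h * \<nu> (((t + c) mod n + i) mod n)\<bar>)"
      unfolding Sk_def by (simp add: sum.atLeast1_atMost_eq)
    also have "\<dots> = Sp t"
      unfolding Sp_def P_def a_def
    proof (intro sum.cong prod.cong refl)
      fix j i
      have pm: "\<nu> (x mod n) = \<nu> x" for x by (rule periodic_mod[of \<nu> n, OF per])
      have e1: "((t + c) mod n + i) mod n = (t + c + i) mod n" by (rule mod_add_left_eq)
      have e2: "t + c + i = t + i + c" by simp
      have "\<nu> (((t + c) mod n + i) mod n) = \<nu> (t + i + c)" unfolding e1 pm e2 ..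
      then show "1 / \<bar>1 + h * \<nu> (((t + c) mod n + i) mod n)\<bar> = 1 / \<bar>1 + h * \<nu> (t + i + c)\<bar>" by simp
    qed
    finally show ?thesis by simp
  qed
  have fin: "finite {Sk h n \<nu> k | k. k < n}" by simp
  have SpM: "Sp t \<le> M" for t unfolding SpSk M_def using n by (intro Max_ge[OF fin]) auto
  have Spnn: "Sp t \<ge> 0" for t unfolding Sp_def using Pnn by (simp add: sum_nonneg)
  have Gnn: "G t \<ge> 0" for t unfolding G_def using Spnn epos by simp
  have Gbound: "h * G t \<le> K0 h n \<nu>" for t
  proof -
    have "h * G t = h * e / \<bar>1 - e\<bar> * Sp t" unfolding G_def by simp
    also have "\<dots> \<le> h * e / \<bar>1 - e\<bar> * M" using SpM h epos by (intro mult_left_mono) auto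
    finally show ?thesis unfolding K0_def M_def e_def .
  qed
  have "\<exists>d. (\<forall>t. d (Suc t) = a t * d t + h * f t) \<and> (\<forall>t. \<bar>d t\<bar> \<le> h * \<epsilon> * G t)"
  proof (cases "e < 1")
    case True
    have Grec: "\<bar>a t\<bar> * G t + 1 = G (Suc t)" for t
    proof -
      have "e * (\<bar>a t\<bar> * Sp t) = e + e * Sp (Suc t) - 1" using ident[of t] epos
        by (simp add: field_simps)
      then show ?thesis unfolding G_def using True by (simp add: field_simps)
    qed
    define d where "d = rec_nat 0 (\<lambda>t dt. a t * dt + h * f t)"
    have d0: "d 0 = 0" and dS: "d (Suc t) = a t * d t + h * f t" for t by (simp_all add: d_def)
    have "\<bar>d t\<bar> \<le> h * \<epsilon> * G t" for t
    proof (induction t)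
      case 0 then show ?case using d0 Gnn h eps by simp
    next
      case (Suc t)
      have "\<bar>d (Suc t)\<bar> \<le> \<bar>a t\<bar> * \<bar>d t\<bar> + h * \<bar>f t\<bar>" unfolding dS using h
        by (metis abs_mult abs_of_pos abs_triangle_ineq)
      also have "\<dots> \<le> \<bar>a t\<bar> * (h * \<epsilon> * G t) + h * \<epsilon>"
        using Suc fb[of t] h by (intro add_mono mult_left_mono) auto
      also have "\<dots> = h * \<epsilon> * G (Suc t)" using Grec[of t, symmetric] by (simp add: algebra_simps)
      finally show ?case .
    qed
    then show ?thesis using dS by blast
  next
    case False
    then have e1: "e > 1" using E1 e_def by simp
    have Grec: "\<bar>a t\<bar> * G t = G (Suc t) + 1" for t
    proof -
      have "e * (\<bar>a t\<bar> * Sp t) = e + e * Sp (Suc t) - 1" using ident[of t] epos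
        by (simp add: field_simps)
      then show ?thesis unfolding G_def using e1 by (simp add: field_simps)
    qed
    define Q where "Q t j = (\<Prod>i<j. 1 / a (t+i))" for t j
    have QP: "\<bar>Q t j\<bar> = P t j" for t j unfolding Q_def P_def by (simp add: abs_prod)
    have QSuc: "Q t (Suc j) = (1/a t) * Q (Suc t) j" for t j
      unfolding Q_def by (subst prod.lessThan_Suc_shift) simp
    have part: "(\<Sum>j<N. P t (Suc j)) \<le> G t" for N t
    proof (induction N arbitrary: t)
      case 0 then show ?case using Gnn by simp
    next
      case (Suc N)
      have "(\<Sum>j<Suc N. P t (Suc j)) = P t (Suc 0) + (\<Sum>j<N. P t (Suc (Suc j)))"
        by (subst sum.lessThan_Suc_shift) simp
      also have "\<dots> = (1/\<bar>a t\<bar>) * (1 + (\<Sum>j<N. P (Suc t) (Suc j)))"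
        unfolding PSuc[of t] sum_distrib_left[symmetric] by (simp add: P_def algebra_simps)
      also have "\<dots> \<le> (1/\<bar>a t\<bar>) * (1 + G (Suc t))"
        using Suc.IH[of "Suc t"] by (intro mult_left_mono) auto
      also have "\<dots> = G t" using Grec[of t] anz by (simp add: field_simps)
      finally show ?case .
    qed
    have summP: "summable (\<lambda>j. P t (Suc j))" for t
      using Pnn part by (intro summableI_nonneg_bounded) auto
    have sumPle: "(\<Sum>j. P t (Suc j)) \<le> G t" for t
      using summP part by (intro suminf_le_const) auto
    have tb: "\<bar>f (t+j) * Q t (Suc j)\<bar> \<le> \<epsilon> * P t (Suc j)" for t j
      unfolding abs_mult QP using fb Pnn by (intro mult_right_mono) auto
    have summA: "summable (\<lambda>j. \<bar>f (t+j) * Q t (Suc j)\<bar>)" for t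
    proof (rule summable_comparison_test'[where g="\<lambda>j. \<epsilon> * P t (Suc j)" and N=0])
      show "summable (\<lambda>j. \<epsilon> * P t (Suc j))" using summP[of t] by (rule summable_mult)
      show "norm \<bar>f (t+j) * Q t (Suc j)\<bar> \<le> \<epsilon> * P t (Suc j)" for j using tb[of t j] by simp
    qed
    have summF: "summable (\<lambda>j. f (t+j) * Q t (Suc j))" for t
      by (rule summable_rabs_cancel[OF summA])
    define S where "S t = (\<Sum>j. f (t+j) * Q t (Suc j))" for t
    have Sabs: "\<bar>S t\<bar> \<le> \<epsilon> * G t" for t
    proof -
      have "\<bar>S t\<bar> \<le> (\<Sum>j. \<bar>f (t+j) * Q t (Suc j)\<bar>)" unfolding S_def by (rule summable_rabs[OF summA])
      also have "\<dots> \<le> (\<Sum>j. \<epsilon> * P t (Suc j))"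
        using summA[of t] summable_mult[OF summP[of t], of \<epsilon>] tb[of t] by (intro suminf_le) auto
      also have "\<dots> = \<epsilon> * (\<Sum>j. P t (Suc j))" using summP by (simp add: suminf_mult)
      also have "\<dots> \<le> \<epsilon> * G t" using sumPle eps by (intro mult_left_mono) auto
      finally show ?thesis .
    qed
    have Srec: "a t * S t = f t + S (Suc t)" for t
    proof -
      have "(\<Sum>j. f (t + Suc j) * Q t (Suc (Suc j))) = S t - f t * Q t (Suc 0)"
        unfolding S_def using suminf_split_head[OF summF[of t]] by simp
      moreover have "(\<Sum>j. f (t + Suc j) * Q t (Suc (Suc j))) = (\<Sum>j. (1 / a t) * (f (Suc t + j) * Q (Suc t) (Suc j)))"
        unfolding QSuc[of t "Suc _"] by (simp add: algebra_simps)
      moreover have "\<dots> = (1 / a t) * S (Suc t)"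
        unfolding S_def by (rule suminf_mult[OF summF[of "Suc t"]])
      moreover have "Q t (Suc 0) = 1 / a t" unfolding Q_def by simp
      ultimately show ?thesis using anz[of t] by (simp add: field_simps)
    qed
    define d where "d t = - h * S t" for t
    have "d (Suc t) = a t * d t + h * f t" for t unfolding d_def using Srec[of t] by (simp add: algebra_simps)
    moreover have "\<bar>d t\<bar> \<le> h * \<epsilon> * G t" for t
      unfolding d_def using Sabs[of t] h by (simp add: abs_mult mult.assoc)
    ultimately show ?thesis by blast
  qed
  then obtain d where drec: "\<And>t. d (Suc t) = a t * d t + h * f t" and dbnd: "\<And>t. \<bar>d t\<bar> \<le> h * \<epsilon> * G t"
    by blast
  show ?thesis
  proof (intro exI[of _ "\<lambda>t. \<xi> t - d t"] conjI allI)
    fix t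
    show "dlt h (\<lambda>t. \<xi> t - d t) t - \<nu> (t + c) * (\<xi> t - d t) = g t"
      using h unfolding dlt_def drec a_def f_def by (simp add: field_simps dlt_def)
    have "\<bar>d t\<bar> \<le> \<epsilon> * (h * G t)" using dbnd[of t] by (simp add: algebra_simps)
    also have "\<dots> \<le> \<epsilon> * K0 h n \<nu>" using Gbound eps by (intro mult_left_mono) auto
    finally show "\<bar>\<xi> t - (\<xi> t - d t)\<bar> \<le> K0 h n \<nu> * \<epsilon>" by (simp add: mult.commute)
  qed
qed

lemma K0_pos:
  fixes h :: real and n :: nat and \<nu> :: "nat \<Rightarrow> real"
  assumes h: "h > 0" and n: "n \<ge> 1" and nz: "\<forall>k. 1 + h*\<nu> k \<noteq> 0"
    and E0: "0 < \<bar>dexp h \<nu> n\<bar>" and E1: "\<bar>dexp h \<nu> n\<bar> \<noteq> 1"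
  shows "K0 h n \<nu> > 0"
proof -
  have fin: "finite {Sk h n \<nu> k | k. k < n}" by simp
  have S0: "Sk h n \<nu> 0 > 0" unfolding Sk_def using n nz
    by (intro sum_pos prod_pos) auto
  have "Sk h n \<nu> 0 \<le> Max {Sk h n \<nu> k | k. k < n}" using n by (intro Max_ge[OF fin]) auto
  then have "Max {Sk h n \<nu> k | k. k < n} > 0" using S0 by linarith
  moreover have "h * \<bar>dexp h \<nu> n\<bar> / \<bar>1 - \<bar>dexp h \<nu> n\<bar>\<bar> > 0" using h E0 E1 by simp
  ultimately show ?thesis unfolding K0_def by (rule mult_pos_pos[rotated])
qed

theorem theorem5p2:
  fixes h :: real and n :: nat and lam :: "nat \<Rightarrow> real"
  assumes "h > 0"
    and "is_cycle n lam"
    and "\<And>k. lam k \<noteq> 1 / h \<and> lam k \<noteq> - 1 / h"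
    and "0 < \<bar>dexp h lam n\<bar>" and "\<bar>dexp h lam n\<bar> \<noteq> 1"
    and "0 < \<bar>dexp h (\<lambda>k. - lam k) n\<bar>" and "\<bar>dexp h (\<lambda>k. - lam k) n\<bar> \<noteq> 1"
  shows "let p = (\<lambda>t. lam (t + 2));
             q = (\<lambda>t. 2 * dlt h lam (t + 1) + dlt h lam (t + 2) - lam (t + 2) * lam (t + 3));
             r = (\<lambda>t. dlt h (dlt h lam) t + lam t * dlt h lam (t + 2)
                       - lam t * lam (t + 2) * lam (t + 3));
             L = (\<lambda>y t. dlt h (dlt h (dlt h y)) t + p t * dlt h (dlt h y) t
                       + q t * dlt h y t + r t * y t)
         in hu_stable L (\<lambda>t. 0) (K0 h n lam * (K0 h n (\<lambda>k. - lam k))^2)"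
proof -
  note h = assms(1)
  have n: "n \<ge> 1" and per: "\<forall>k. lam (k + n) = lam k" using assms(2) unfolding is_cycle_def by auto
  have perm: "\<forall>k. (\<lambda>k. - lam k) (k + n) = (\<lambda>k. - lam k) k" using per by simp
  have nz1: "\<forall>k. 1 + h * lam k \<noteq> 0"
  proof
    fix k
    show "1 + h * lam k \<noteq> 0"
    proof
      assume "1 + h * lam k = 0"
      then have "lam k = - 1 / h" using h by (simp add: field_simps)
      then show False using assms(3)[of k] by simp
    qed
  qed
  have nz2: "\<forall>k. 1 + h * (\<lambda>k. - lam k) k \<noteq> 0"
  proof
    fix k
    show "1 + h * (\<lambda>k. - lam k) k \<noteq> 0"
    proof
      assume "1 + h * (\<lambda>k. - lam k) k = 0"
      then have "lam k = 1 / h" using h by (simp add: field_simps)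
      then show False using assms(3)[of k] by simp
    qed
  qed
  define KA where "KA = K0 h n lam"
  define KB where "KB = K0 h n (\<lambda>k. - lam k)"
  have KA: "KA > 0" unfolding KA_def using K0_pos[OF h n nz1 assms(4,5)] .
  have KB: "KB > 0" unfolding KB_def using K0_pos[OF h n nz2 assms(6,7)] .
  define C where "C y u = dlt h y u + lam u * y u" for y u
  define B where "B y u = dlt h y u + lam (u+2) * y u" for y u
  define A where "A y u = dlt h y u - lam (u+3) * y u" for y u
  define L where "L y t = dlt h (dlt h (dlt h y)) t + lam (t + 2) * dlt h (dlt h y) t
       + (2 * dlt h lam (t + 1) + dlt h lam (t + 2) - lam (t + 2) * lam (t + 3)) * dlt h y t
       + (dlt h (dlt h lam) t + lam t * dlt h lam (t + 2) - lam t * lam (t + 2) * lam (t + 3)) * y t"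
    for y t
  have LABC: "L y t = A (B (C y)) t" for y t
    unfolding L_def A_def B_def C_def using L_factor[of h y t lam] h by simp
  have "hu_stable L (\<lambda>t. 0) (KA * KB^2)"
    unfolding hu_stable_def
  proof (intro conjI allI impI)
    show "KA * KB^2 > 0" using KA KB by simp
    fix \<epsilon> :: real and \<xi>
    assume "\<epsilon> > 0" and Lb: "\<forall>t. \<bar>L \<xi> t - 0\<bar> \<le> \<epsilon>"
    have b1: "\<forall>t. \<bar>dlt h (B (C \<xi>)) t - lam (t+3) * B (C \<xi>) t - 0\<bar> \<le> \<epsilon>"
      using Lb unfolding LABC A_def by simp
    obtain u0 where u0e: "\<forall>t. dlt h u0 t - lam (t+3) * u0 t = 0"
      and u0b: "\<forall>t. \<bar>B (C \<xi>) t - u0 t\<bar> \<le> KA * \<epsilon>"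
      using first_order[OF h n per nz1 assms(4,5) b1] unfolding KA_def by blast
    have b2: "\<forall>t. \<bar>dlt h (C \<xi>) t - (\<lambda>k. - lam k) (t+2) * C \<xi> t - u0 t\<bar> \<le> KA * \<epsilon>"
      using u0b unfolding B_def by simp
    obtain v0 where v0e: "\<forall>t. dlt h v0 t - (\<lambda>k. - lam k) (t+2) * v0 t = u0 t"
      and v0b: "\<forall>t. \<bar>C \<xi> t - v0 t\<bar> \<le> KB * (KA * \<epsilon>)"
      using first_order[OF h n perm nz2 assms(6,7) b2] unfolding KB_def by blast
    have b3: "\<forall>t. \<bar>dlt h \<xi> t - (\<lambda>k. - lam k) (t+0) * \<xi> t - v0 t\<bar> \<le> KB * (KA * \<epsilon>)"
      using v0b unfolding C_def by simp
    obtain y where ye: "\<forall>t. dlt h y t - (\<lambda>k. - lam k) (t+0) * y t = v0 t"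
      and yb: "\<forall>t. \<bar>\<xi> t - y t\<bar> \<le> KB * (KB * (KA * \<epsilon>))"
      using first_order[OF h n perm nz2 assms(6,7) b3] unfolding KB_def by blast
    have Cy: "C y = v0" using ye unfolding C_def by (auto simp: fun_eq_iff)
    have Bv: "B v0 = u0" using v0e unfolding B_def by (auto simp: fun_eq_iff)
    have "\<forall>t. L y t = 0" using u0e unfolding LABC Cy Bv A_def by simp
    moreover have "\<forall>t. \<bar>\<xi> t - y t\<bar> \<le> KA * KB^2 * \<epsilon>"
      using yb by (simp add: power2_eq_square algebra_simps)
    ultimately show "\<exists>y. (\<forall>t. L y t = 0) \<and> (\<forall>t. \<bar>\<xi> t - y t\<bar> \<le> KA * KB^2 * \<epsilon>)" by blast
  qed
  then show ?thesis unfolding Let_def L_def KA_def KB_def by simp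
qed

end
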